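(* Let $\{V_1,W_1,V_2,W_2,\ldots\}$ be a partition of $\mathbb N$ into nonempty bounded intervals of integers such that $\max V_k+1=\min W_k$ and $\max W_k+1=\min V_{k+1}$ for all $k\ge1$. Let $(L_n)_{n=1}^\infty$ be a sequence of non-empty bounded intervals of integers in $\mathbb N$, and let \[\Lambda=\Big\{x\in(0,1)\setminus\mathbb Q\colon a_n(x)\in L_n\text{ for } n\in V_k,\ k\in\mathbb N,\ \text{and } a_n(x)=a_{\max V_k}(x)+n-\max V_k\text{ for } n\in W_k,\ k\in\mathbb N\Big\}.\] (a) There exists a Borel probability measure $\mu$ on $[0,1]$ such that $\mu(\Lambda)=1$ and, for all $n\in\mathbb N$ and all $(a_1,\ldots,a_n)\in\mathbb N^n$ with $I_n(a_1,\ldots,a_n)\cap\Lambda\ne\emptyset$, \[\mu(I_n(a_1,\ldots,a_n))=\begin{cases}\displaystyle\prod_{i=1}^n\frac{1}{\#L_i}&\text{for }n\in V_1,\\[2mm] \displaystyle\prod_{m=1}^k\prod_{i\in V_m}\frac{1}{\#L_i}&\text{for }n\in W_k,\ k\ge1,\\[2mm] \displaystyle\prod_{m=1}^k\prod_{i\in V_m}\frac{1}{\#L_i}\prod_{i=\min V_{k+1}}^{n}\frac{1}{\#L_i}&\text{for }n\in V_{k+1},\ k\ge1.\end{cases}\] (b) If $L_n=[(2n)^t,(2n+1)^t)\cap\mathbb N$ for all $n\ge1$, where $t\in\mathbb N$, $t\ge2$, then $\Lambda\subset J$.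
   Context: Every irrational $x\in(0,1)$ has a regular continued fraction expansion with partial quotients $a_n(x)\in\mathbb N$, $n\ge1$. For $n\in\mathbb N$ and $(a_1,\ldots,a_n)\in\mathbb N^n$, the $n$-th fundamental interval $I_n(a_1,\ldots,a_n)$ is the set of points of $(0,1]$ whose (finite or infinite) regular continued fraction expansion begins with $a_1,\ldots,a_n$; it is an interval with endpoints $p_n/q_n$ and $(p_n+p_{n-1})/(q_n+q_{n-1})$, where $p_{-1}=1,p_0=0,p_i=a_ip_{i-1}+p_{i-2}$ and $q_{-1}=0,q_0=1,q_i=a_iq_{i-1}+q_{i-2}$. $\#$ denotes cardinality. $J=\{x\in(0,1)\setminus\mathbb Q\colon a_n(x)<a_{n+1}(x)\text{ for every }n\ge1\}$. *)

theory Defs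
  imports "HOL-Probability.Probability"
begin

definition gauss_map :: "real \<Rightarrow> real" where
  "gauss_map x = frac (1 / x)"

definition cf_a :: "nat \<Rightarrow> real \<Rightarrow> nat" where
  "cf_a n x = nat \<lfloor>1 / ((gauss_map ^^ (n - 1)) x)\<rfloor>"

text \<open>Convergent numerators/denominators p_n, q_n for n >= 0
  (p_0 = 0, p_1 = 1, q_0 = 1, q_1 = a_1), which agree with the recursion
  p_(-1)=1, p_0=0, q_(-1)=0, q_0=1.\<close>

fun cf_p :: "(nat \<Rightarrow> nat) \<Rightarrow> nat \<Rightarrow> nat" where
  "cf_p a 0 = 0"
| "cf_p a (Suc 0) = 1"
| "cf_p a (Suc (Suc n)) = a (Suc (Suc n)) * cf_p a (Suc n) + cf_p a n"

fun cf_q :: "(nat \<Rightarrow> nat) \<Rightarrow> nat \<Rightarrow> nat" where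
  "cf_q a 0 = 1"
| "cf_q a (Suc 0) = a 1"
| "cf_q a (Suc (Suc n)) = a (Suc (Suc n)) * cf_q a (Suc n) + cf_q a n"

definition fund_interval :: "nat \<Rightarrow> (nat \<Rightarrow> nat) \<Rightarrow> real set" where
  "fund_interval n a =
     (let e1 = real (cf_p a n) / real (cf_q a n);
          e2 = real (cf_p a n + cf_p a (n - 1)) / real (cf_q a n + cf_q a (n - 1))
      in {min e1 e2 .. max e1 e2})"

definition J_set :: "real set" where
  "J_set = {x \<in> {0<..<1} - \<rat>. \<forall>n\<ge>1. cf_a n x < cf_a (Suc n) x}"

definition Lambda_set ::
  "(nat \<Rightarrow> nat set) \<Rightarrow> (nat \<Rightarrow> nat set) \<Rightarrow> (nat \<Rightarrow> nat set) \<Rightarrow> real set" where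
  "Lambda_set V W L = {x \<in> {0<..<1} - \<rat>.
      (\<forall>k\<ge>1. \<forall>n\<in>V k. cf_a n x \<in> L n) \<and>
      (\<forall>k\<ge>1. \<forall>n\<in>W k. cf_a n x = cf_a (Max (V k)) x + n - Max (V k))}"

end

theory Submission
  imports Defs
begin


definition pm :: "(nat \<Rightarrow> nat) \<Rightarrow> nat \<Rightarrow> nat" where
  "pm a n = (if n = 0 then 1 else cf_p a (n - 1))"
definition qm :: "(nat \<Rightarrow> nat) \<Rightarrow> nat \<Rightarrow> nat" where
  "qm a n = (if n = 0 then 0 else cf_q a (n - 1))"
definition gg :: "(nat \<Rightarrow> nat) \<Rightarrow> nat \<Rightarrow> real \<Rightarrow> real" where
  "gg a n t = (real (cf_p a n) + t * real (pm a n)) / (real (cf_q a n) + t * real (qm a n))"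

lemma cf_p_Suc: "cf_p a (Suc n) = a (Suc n) * cf_p a n + pm a n"
  by (cases n) (auto simp: pm_def)
lemma cf_q_Suc: "cf_q a (Suc n) = a (Suc n) * cf_q a n + qm a n"
  by (cases n) (auto simp: qm_def)
lemma pm_Suc[simp]: "pm a (Suc n) = cf_p a n" by (simp add: pm_def)
lemma qm_Suc[simp]: "qm a (Suc n) = cf_q a n" by (simp add: qm_def)

lemma det: "real (pm a n) * real (cf_q a n) - real (cf_p a n) * real (qm a n) = (-1) ^ n"
proof (induction n)
  case 0 then show ?case by (simp add: pm_def qm_def)
next
  case (Suc n)
  have "real (pm a (Suc n)) * real (cf_q a (Suc n)) - real (cf_p a (Suc n)) * real (qm a (Suc n))
     = - (real (pm a n) * real (cf_q a n) - real (cf_p a n) * real (qm a n))"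
    by (simp add: cf_p_Suc cf_q_Suc algebra_simps)
  then show ?case using Suc by simp
qed

lemma q_ge: "(\<forall>i\<in>{1..n}. a i \<ge> 1) \<Longrightarrow> cf_q a n \<ge> max 1 n"
proof (induction a n rule: cf_q.induct)
  case (3 a n)
  have "cf_q a (Suc n) \<ge> max 1 (Suc n)" using 3 by auto
  moreover have "cf_q a n \<ge> max 1 n" using 3 by auto
  moreover have "a (Suc (Suc n)) \<ge> 1" using 3(3) by auto
  ultimately have "a (Suc (Suc n)) * cf_q a (Suc n) \<ge> cf_q a (Suc n)" by simp
  moreover have "cf_q a (Suc (Suc n)) = a (Suc (Suc n)) * cf_q a (Suc n) + cf_q a n" by simp
  ultimately show ?case using \<open>cf_q a n \<ge> max 1 n\<close> \<open>cf_q a (Suc n) \<ge> max 1 (Suc n)\<close>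
    by (simp only: max_def split: if_splits) linarith+
qed auto

lemma q_pos: "(\<forall>i\<in>{1..n}. a i \<ge> 1) \<Longrightarrow> cf_q a n \<ge> 1"
  using q_ge by fastforce

lemma p_le_q: "(\<forall>i\<in>{1..n}. a i \<ge> 1) \<Longrightarrow> cf_p a n \<le> cf_q a n"
proof (induction a n rule: cf_p.induct)
  case (3 a n)
  have "cf_p a (Suc n) \<le> cf_q a (Suc n)" "cf_p a n \<le> cf_q a n" using 3 by auto
  then show ?case by (simp add: add_mono)
qed auto

lemma cf_cong: "(\<forall>i\<in>{1..n}. a i = b i) \<Longrightarrow> cf_p a n = cf_p b n \<and> cf_q a n = cf_q b n"
  by (induction a n rule: cf_p.induct) auto

lemma gg_cong: "(\<forall>i\<in>{1..n}. a i = b i) \<Longrightarrow> gg a n = gg b n"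
proof -
  assume h: "\<forall>i\<in>{1..n}. a i = b i"
  have "\<forall>i\<in>{1..n-1}. a i = b i" using h by auto
  then have "pm a n = pm b n \<and> qm a n = qm b n"
    using cf_cong[of "n - 1" a b] by (auto simp: pm_def qm_def)
  then show ?thesis using cf_cong[OF h] by (auto simp: gg_def fun_eq_iff)
qed

lemma gg_0[simp]: "gg a 0 t = t" by (simp add: gg_def pm_def qm_def)

lemma frac_aux: "x \<noteq> 0 \<Longrightarrow> ((A::real) + (1/x) * B) / (C + (1/x) * D) = (x * A + B) / (x * C + D)"
proof -
  assume x: "x \<noteq> 0"
  have "A + (1/x) * B = (x * A + B) / x" "C + (1/x) * D = (x * C + D) / x" using x by (auto simp: field_simps)
  then show ?thesis using x by simp
qed

lemma gg_Suc:
  assumes "a (Suc n) \<ge> 1" "t \<ge> 0" "(\<forall>i\<in>{1..n}. a i \<ge> 1)"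
  shows "gg a n (1 / (real (a (Suc n)) + t)) = gg a (Suc n) t"
proof -
  let ?c = "real (a (Suc n))"
  have c: "?c + t > 0" using assms by simp
  have q: "real (cf_q a n) \<ge> 1" using q_pos[OF assms(3)] by simp
  have "gg a n (1 / (?c + t)) = ((?c + t) * real (cf_p a n) + real (pm a n)) / ((?c + t) * real (cf_q a n) + real (qm a n))"
    unfolding gg_def using c by (intro frac_aux) simp
  also have "\<dots> = gg a (Suc n) t"
    unfolding gg_def by (simp add: cf_p_Suc cf_q_Suc algebra_simps)
  finally show ?thesis .
qed

lemma den_pos: "(\<forall>i\<in>{1..n}. a i \<ge> 1) \<Longrightarrow> s \<ge> 0 \<Longrightarrow> real (cf_q a n) + s * real (qm a n) > 0"
  using q_pos[of n a] by (simp add: add_pos_nonneg)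

lemma gg_diff:
  assumes "\<forall>i\<in>{1..n}. a i \<ge> 1" "s \<ge> 0" "t \<ge> 0"
  shows "gg a n s - gg a n t = (s - t) * (-1) ^ n /
     ((real (cf_q a n) + s * real (qm a n)) * (real (cf_q a n) + t * real (qm a n)))"
proof -
  have d1: "real (cf_q a n) + s * real (qm a n) > 0" and d2: "real (cf_q a n) + t * real (qm a n) > 0"
    using den_pos assms by auto
  have "gg a n s - gg a n t = ((real (cf_p a n) + s * real (pm a n)) * (real (cf_q a n) + t * real (qm a n))
     - (real (cf_p a n) + t * real (pm a n)) * (real (cf_q a n) + s * real (qm a n))) /
     ((real (cf_q a n) + s * real (qm a n)) * (real (cf_q a n) + t * real (qm a n)))"
    unfolding gg_def using d1 d2 by (simp add: field_simps)
  also have "(real (cf_p a n) + s * real (pm a n)) * (real (cf_q a n) + t * real (qm a n))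
     - (real (cf_p a n) + t * real (pm a n)) * (real (cf_q a n) + s * real (qm a n))
     = (s - t) * (real (pm a n) * real (cf_q a n) - real (cf_p a n) * real (qm a n))"
    by (simp add: algebra_simps)
  finally show ?thesis by (simp add: det)
qed

lemma gg_mono:
  assumes "\<forall>i\<in>{1..n}. a i \<ge> 1" "0 \<le> s" "s \<le> t"
  shows "if even n then gg a n s \<le> gg a n t else gg a n t \<le> gg a n s"
proof -
  have d: "(real (cf_q a n) + s * real (qm a n)) * (real (cf_q a n) + t * real (qm a n)) > 0"
    using den_pos assms by (simp add: mult_pos_pos)
  have e: "gg a n t - gg a n s = (t - s) * (-1) ^ n /
     ((real (cf_q a n) + t * real (qm a n)) * (real (cf_q a n) + s * real (qm a n)))"
    using gg_diff[of n a t s] assms by simp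
  show ?thesis
  proof (cases "even n")
    case True
    then have "gg a n t - gg a n s \<ge> 0" using e d assms by (simp add: mult.commute)
    then show ?thesis using True by simp
  next
    case False
    then have "gg a n t - gg a n s \<le> 0" using e d assms
      by (simp add: mult.commute divide_nonpos_pos)
    then show ?thesis using False by simp
  qed
qed


lemma gg_strict:
  assumes "\<forall>i\<in>{1..n}. a i \<ge> 1" "0 \<le> x" "x < y"
  shows "if even n then gg a n x < gg a n y else gg a n y < gg a n x"
proof -
  have d: "(real (cf_q a n) + y * real (qm a n)) * (real (cf_q a n) + x * real (qm a n)) > 0"
    using den_pos assms by (simp add: mult_pos_pos)
  have e: "gg a n y - gg a n x = (y - x) * (-1) ^ n /
     ((real (cf_q a n) + y * real (qm a n)) * (real (cf_q a n) + x * real (qm a n)))"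
    using gg_diff[of n a y x] assms by simp
  show ?thesis
  proof (cases "even n")
    case True
    then have "gg a n y - gg a n x > 0" using e d assms by simp
    then show ?thesis using True by simp
  next
    case False
    then have "gg a n y - gg a n x < 0" using e d assms
      by (simp add: divide_neg_pos)
    then show ?thesis using False by simp
  qed
qed

lemma gg_le_iff:
  assumes "\<forall>i\<in>{1..n}. a i \<ge> 1" "0 \<le> x" "0 \<le> y"
  shows "gg a n x \<le> gg a n y \<longleftrightarrow> (if even n then x \<le> y else y \<le> x)"
proof (cases "even n")
  case True
  have 1: "x < y \<Longrightarrow> gg a n x < gg a n y" using gg_strict[of n a x y] assms True by simp
  have 2: "y < x \<Longrightarrow> gg a n y < gg a n x" using gg_strict[of n a y x] assms True by simp
  show ?thesis using 1 2 True by (cases x y rule: linorder_cases) auto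
next
  case False
  have 1: "x < y \<Longrightarrow> gg a n y < gg a n x" using gg_strict[of n a x y] assms False by simp
  have 2: "y < x \<Longrightarrow> gg a n x < gg a n y" using gg_strict[of n a y x] assms False by simp
  show ?thesis using 1 2 False by (cases x y rule: linorder_cases) auto
qed

definition betw :: "real \<Rightarrow> real \<Rightarrow> real \<Rightarrow> bool" where
  "betw x u v \<longleftrightarrow> x \<in> {min u v..max u v}"

lemma betw_sym: "betw x u v \<longleftrightarrow> betw x v u"
  unfolding betw_def by (auto simp: min.commute max.commute)

lemma betw_nest:
  assumes "\<forall>i\<in>{1..n}. a i \<ge> 1" "0 \<le> s1" "s1 \<le> s2" "s2 \<le> s3" "s3 \<le> s4"
    and "betw x (gg a n s2) (gg a n s3)"
  shows "betw x (gg a n s1) (gg a n s4)"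
proof (cases "even n")
  case True
  have "gg a n s1 \<le> gg a n s2" "gg a n s2 \<le> gg a n s3" "gg a n s3 \<le> gg a n s4"
    using gg_le_iff[OF assms(1)] assms True by auto
  then show ?thesis using assms(6) unfolding betw_def by auto
next
  case False
  have "gg a n s2 \<le> gg a n s1" "gg a n s3 \<le> gg a n s2" "gg a n s4 \<le> gg a n s3"
    using gg_le_iff[OF assms(1)] assms False by auto
  then show ?thesis using assms(6) unfolding betw_def by auto
qed

lemma betw_gg_iff:
  assumes "\<forall>i\<in>{1..n}. a i \<ge> 1" "0 \<le> s" "0 \<le> u" "u \<le> v"
  shows "betw (gg a n s) (gg a n u) (gg a n v) \<longleftrightarrow> u \<le> s \<and> s \<le> v"
proof (cases "even n")
  case True
  have "gg a n u \<le> gg a n v" using gg_le_iff[OF assms(1)] assms True by auto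
  then show ?thesis using gg_le_iff[OF assms(1)] assms True unfolding betw_def by auto
next
  case False
  have "gg a n v \<le> gg a n u" using gg_le_iff[OF assms(1)] assms False by auto
  then show ?thesis using gg_le_iff[OF assms(1)] assms False unfolding betw_def by auto
qed


lemma fund_eq: "n \<ge> 1 \<Longrightarrow> fund_interval n a = {y. betw y (gg a n 0) (gg a n 1)}"
  unfolding fund_interval_def gg_def betw_def pm_def qm_def Let_def by auto

lemma gauss_step:
  assumes "y \<in> {0<..<1} - \<rat>"
  shows "gauss_map y \<in> {0<..<1} - \<rat> \<and> nat \<lfloor>1/y\<rfloor> \<ge> 1 \<and>
         y = 1 / (real (nat \<lfloor>1/y\<rfloor>) + gauss_map y)"
proof -
  have y0: "0 < y" "y < 1" "y \<notin> \<rat>" using assms by auto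
  have gt: "1 / y > 1" using y0 by simp
  have irr: "1 / y \<notin> \<rat>"
  proof
    assume "1 / y \<in> \<rat>"
    then have "1 / (1 / y) \<in> \<rat>" by (rule Rats_divide[OF Rats_1])
    then show False using y0 by simp
  qed
  have fl: "\<lfloor>1/y\<rfloor> \<ge> 1" using gt by (simp add: le_floor_iff)
  have g: "gauss_map y = 1/y - \<lfloor>1/y\<rfloor>" unfolding gauss_map_def frac_def by simp
  have g0: "gauss_map y \<noteq> 0"
  proof
    assume "gauss_map y = 0"
    then have "1/y \<in> \<int>" unfolding gauss_map_def using frac_eq_0_iff by blast
    then show False using irr Ints_subset_Rats by blast
  qed
  have "gauss_map y \<ge> 0" "gauss_map y < 1" unfolding gauss_map_def by (auto simp: frac_lt_1)
  moreover have "gauss_map y \<notin> \<rat>"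
  proof
    assume "gauss_map y \<in> \<rat>"
    then have "gauss_map y + of_int \<lfloor>1/y\<rfloor> \<in> \<rat>" by (intro Rats_add) auto
    then show False using irr g by simp
  qed
  moreover have "real (nat \<lfloor>1/y\<rfloor>) = of_int \<lfloor>1/y\<rfloor>"
    using fl by (intro of_nat_nat) linarith
  moreover have "y = 1 / (of_int \<lfloor>1/y\<rfloor> + gauss_map y)" using g y0 by simp
  moreover have "nat \<lfloor>1/y\<rfloor> \<ge> 1" using fl by linarith
  ultimately show ?thesis using g0 by auto
qed

lemma orbit: "x \<in> {0<..<1} - \<rat> \<Longrightarrow> (gauss_map ^^ n) x \<in> {0<..<1} - \<rat>"
proof (induction n)
  case (Suc n)
  then show ?case using gauss_step[OF Suc.IH] by simp
qed simp

lemma digit_ge1: "x \<in> {0<..<1} - \<rat> \<Longrightarrow> i \<ge> 1 \<Longrightarrow> cf_a i x \<ge> 1"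
  using gauss_step[OF orbit[of x "i - 1"]] unfolding cf_a_def by auto

lemma forward:
  assumes x: "x \<in> {0<..<1} - \<rat>"
  shows "x = gg (\<lambda>i. cf_a i x) n ((gauss_map ^^ n) x)"
proof (induction n)
  case 0 then show ?case by simp
next
  case (Suc n)
  let ?d = "\<lambda>i. cf_a i x"
  let ?y = "(gauss_map ^^ n) x"
  have st: "gauss_map ?y \<in> {0<..<1} - \<rat> \<and> nat \<lfloor>1/?y\<rfloor> \<ge> 1 \<and>
         ?y = 1 / (real (nat \<lfloor>1/?y\<rfloor>) + gauss_map ?y)"
    using gauss_step[OF orbit[OF x, of n]] .
  have c: "?d (Suc n) = nat \<lfloor>1/?y\<rfloor>" unfolding cf_a_def by simp
  have dg: "\<forall>i\<in>{1..n}. ?d i \<ge> 1" using digit_ge1[OF x] by auto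
  have "x = gg ?d n (1 / (real (?d (Suc n)) + gauss_map ?y))" using Suc st c by simp
  also have "\<dots> = gg ?d (Suc n) (gauss_map ?y)"
    using gg_Suc[of ?d n "gauss_map ?y"] st c dg by simp
  finally show ?case by simp
qed

lemma backward:
  assumes x: "x \<in> {0<..<1} - \<rat>"
  shows "(\<forall>i\<in>{1..n}. a i \<ge> 1) \<Longrightarrow> betw x (gg a n 0) (gg a n 1) \<Longrightarrow> \<forall>i\<in>{1..n}. cf_a i x = a i"
proof (induction n)
  case 0 then show ?case by simp
next
  case (Suc n)
  let ?c = "a (Suc n)"
  have c1: "?c \<ge> 1" using Suc.prems by auto
  have an: "\<forall>i\<in>{1..n}. a i \<ge> 1" using Suc.prems by auto
  have e0: "gg a (Suc n) 0 = gg a n (1 / real ?c)" using gg_Suc[of a n 0] c1 an by simp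
  have e1: "gg a (Suc n) 1 = gg a n (1 / (real ?c + 1))" using gg_Suc[of a n 1] c1 an by simp
  have b: "betw x (gg a n (1 / (real ?c + 1))) (gg a n (1 / real ?c))"
    using Suc.prems(2) e0 e1 betw_sym by auto
  have le1: "1 / (real ?c + 1) \<le> 1 / real ?c" using c1 by (simp add: frac_le)
  have le2: "1 / real ?c \<le> 1" using c1 by simp
  have "betw x (gg a n 0) (gg a n 1)"
    by (rule betw_nest[OF an _ _ le1 le2 b]) auto
  then have IH: "\<forall>i\<in>{1..n}. cf_a i x = a i" using Suc.IH an by blast
  let ?d = "\<lambda>i. cf_a i x"
  let ?y = "(gauss_map ^^ n) x"
  have geq: "gg a n = gg ?d n" using gg_cong[of n a ?d] IH by auto
  have y: "?y \<in> {0<..<1} - \<rat>" using orbit[OF x] .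
  have xy: "x = gg a n ?y" using forward[OF x, of n] geq by simp
  have "1 / (real ?c + 1) \<le> ?y \<and> ?y \<le> 1 / real ?c"
    using betw_gg_iff[OF an, of ?y "1 / (real ?c + 1)" "1 / real ?c"] b xy y le1 by auto
  moreover have "?y \<noteq> 1 / (real ?c + 1)" "?y \<noteq> 1 / real ?c"
    using y by (auto simp del: of_nat_Suc)
  ultimately have lt: "1 / (real ?c + 1) < ?y" "?y < 1 / real ?c" by auto
  have yp: "?y > 0" using y by auto
  have "real ?c < 1 / ?y" using lt(2) yp c1 by (simp add: field_simps)
  moreover have "1 / ?y < real ?c + 1" using lt(1) yp c1 by (simp add: field_simps)
  ultimately have "\<lfloor>1 / ?y\<rfloor> = int ?c" by (simp add: floor_eq_iff)
  then have "cf_a (Suc n) x = ?c" unfolding cf_a_def by simp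
  then show ?case using IH by (auto simp: le_Suc_eq)
qed

lemma fund_iff:
  assumes "n \<ge> 1" "\<forall>i\<in>{1..n}. a i \<ge> 1" "x \<in> {0<..<1} - \<rat>"
  shows "x \<in> fund_interval n a \<longleftrightarrow> (\<forall>i\<in>{1..n}. cf_a i x = a i)"
proof
  assume "x \<in> fund_interval n a"
  then show "\<forall>i\<in>{1..n}. cf_a i x = a i" using backward[OF assms(3) assms(2)] fund_eq[OF assms(1)] by auto
next
  assume h: "\<forall>i\<in>{1..n}. cf_a i x = a i"
  let ?y = "(gauss_map ^^ n) x"
  have geq: "gg a n = gg (\<lambda>i. cf_a i x) n" using gg_cong[of n a "\<lambda>i. cf_a i x"] h by auto
  have y: "?y \<in> {0<..<1} - \<rat>" using orbit[OF assms(3)] .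
  have "x = gg a n ?y" using forward[OF assms(3), of n] geq by simp
  then have "betw x (gg a n 0) (gg a n 1)" using betw_gg_iff[OF assms(2), of ?y 0 1] y by auto
  then show "x \<in> fund_interval n a" using fund_eq[OF assms(1)] by auto
qed


lemma betw_dist: "betw y u v \<Longrightarrow> betw z u v \<Longrightarrow> \<bar>y - z\<bar> \<le> \<bar>u - v\<bar>"
  unfolding betw_def by (auto simp: abs_if min_def max_def split: if_splits)

lemma gg_len:
  assumes "\<forall>i\<in>{1..n}. a i \<ge> 1"
  shows "\<bar>gg a n 0 - gg a n 1\<bar> = 1 / (real (cf_q a n) * (real (cf_q a n) + real (qm a n)))"
  using gg_diff[OF assms, of 0 1] by (simp add: abs_mult power_abs)

lemma gg_len_le:
  assumes "\<forall>i\<in>{1..n}. a i \<ge> 1"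
  shows "\<bar>gg a n 0 - gg a n 1\<bar> \<le> 1 / real (cf_q a n)"
proof -
  have q: "real (cf_q a n) \<ge> 1" using q_pos[OF assms] by simp
  have "real (cf_q a n) \<le> real (cf_q a n) * (real (cf_q a n) + real (qm a n))"
    using q by (simp add: mult_le_cancel_left1 mult_nonneg_nonneg)
  then have "1 / (real (cf_q a n) * (real (cf_q a n) + real (qm a n))) \<le> 1 / real (cf_q a n)"
    using q by (intro divide_left_mono) auto
  then show ?thesis using gg_len[OF assms] by simp
qed

lemma nest_Suc:
  assumes "\<forall>i\<in>{1..Suc n}. a i \<ge> 1" "betw x (gg a (Suc n) 0) (gg a (Suc n) 1)"
  shows "betw x (gg a n 0) (gg a n 1)"
proof -
  let ?c = "a (Suc n)"
  have c1: "?c \<ge> 1" using assms by auto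
  have an: "\<forall>i\<in>{1..n}. a i \<ge> 1" using assms by auto
  have e0: "gg a (Suc n) 0 = gg a n (1 / real ?c)" using gg_Suc[of a n 0] c1 an by simp
  have e1: "gg a (Suc n) 1 = gg a n (1 / (real ?c + 1))" using gg_Suc[of a n 1] c1 an by simp
  have b: "betw x (gg a n (1 / (real ?c + 1))) (gg a n (1 / real ?c))"
    using assms(2) e0 e1 betw_sym by auto
  have le1: "1 / (real ?c + 1) \<le> 1 / real ?c" using c1 by (simp add: frac_le)
  have le2: "1 / real ?c \<le> 1" using c1 by simp
  show ?thesis
    by (rule betw_nest[OF an _ _ le1 le2 b]) auto
qed

lemma nest_le:
  assumes "\<forall>i\<ge>1. a i \<ge> 1" "m \<le> n" "betw x (gg a n 0) (gg a n 1)"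
  shows "betw x (gg a m 0) (gg a m 1)"
  using assms(2,3)
proof (induction n)
  case 0 then show ?case by simp
next
  case (Suc n)
  show ?case
  proof (cases "m = Suc n")
    case True then show ?thesis using Suc by simp
  next
    case False
    then have "m \<le> n" using Suc by simp
    moreover have "betw x (gg a n 0) (gg a n 1)" using nest_Suc[OF _ Suc.prems(2)] assms(1) by auto
    ultimately show ?thesis using Suc.IH by blast
  qed
qed

definition cfval :: "(nat \<Rightarrow> nat) \<Rightarrow> real" where
  "cfval a = lim (\<lambda>n. gg a n 0)"

lemma cf_exists:
  assumes a1: "\<forall>i\<ge>1. a i \<ge> 1"
  shows "cfval a \<in> {0<..<1} - \<rat> \<and> (\<forall>i\<ge>1. cf_a i (cfval a) = a i) \<and> (\<lambda>n. gg a n 0) \<longlonglongrightarrow> cfval a"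
proof -
  have an: "\<forall>i\<in>{1..n}. a i \<ge> 1" for n using a1 by auto
  define S where "S n = {y. betw y (gg a (Suc n) 0) (gg a (Suc n) 1)}" for n
  have S_eq: "S n = {min (gg a (Suc n) 0) (gg a (Suc n) 1)..max (gg a (Suc n) 0) (gg a (Suc n) 1)}" for n
    unfolding S_def betw_def by auto
  have len: "\<bar>gg a n 0 - gg a n 1\<bar> \<le> 1 / real n" if "n \<ge> 1" for n
  proof -
    have "real (cf_q a n) \<ge> real n" using q_ge[OF an, of n] by simp
    then have "1 / real (cf_q a n) \<le> 1 / real n" using that by (intro divide_left_mono) auto
    then show ?thesis using gg_len_le[OF an, of n] by simp
  qed
  obtain x where x: "\<And>n. x \<in> S n"
  proof (rule decreasing_closed_nest[of S])
    show "closed (S n)" for n unfolding S_eq by simp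
    show "S n \<noteq> {}" for n unfolding S_eq by simp
    show "S n \<subseteq> S m" if "m \<le> n" for m n
      unfolding S_def using nest_le[OF a1, of "Suc m" "Suc n"] that by auto
    show "\<exists>n. \<forall>x\<in>S n. \<forall>y\<in>S n. dist x y < e" if e0: "e > 0" for e
    proof -
      obtain N where N: "inverse (real (Suc N)) < e" using reals_Archimedean[OF e0] by blast
      have "\<forall>x\<in>S N. \<forall>y\<in>S N. dist x y < e"
      proof (intro ballI)
        fix y z assume "y \<in> S N" "z \<in> S N"
        then have "\<bar>y - z\<bar> \<le> \<bar>gg a (Suc N) 0 - gg a (Suc N) 1\<bar>" unfolding S_def using betw_dist by auto
        also have "\<dots> \<le> 1 / real (Suc N)" using len[of "Suc N"] by simp
        finally show "dist y z < e" using N by (simp add: dist_real_def inverse_eq_divide)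
      qed
      then show ?thesis by blast
    qed
  qed blast
  have xb: "betw x (gg a n 0) (gg a n 1)" if "n \<ge> 1" for n
    using x[of "n - 1"] that unfolding S_def by simp
  have close: "\<bar>gg a n 0 - x\<bar> \<le> 1 / real n" if "n \<ge> 1" for n
  proof -
    have "betw (gg a n 0) (gg a n 0) (gg a n 1)" unfolding betw_def by auto
    then have "\<bar>gg a n 0 - x\<bar> \<le> \<bar>gg a n 0 - gg a n 1\<bar>" using betw_dist xb[OF that] by blast
    then show ?thesis using len[OF that] by simp
  qed
  have conv: "(\<lambda>n. gg a n 0) \<longlonglongrightarrow> x"
  proof (rule LIMSEQ_I)
    fix r :: real assume r: "0 < r"
    obtain N where N: "inverse (real (Suc N)) < r" using reals_Archimedean[OF r] by blast
    have "norm (gg a n 0 - x) < r" if "n \<ge> Suc N" for n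
    proof -
      have "norm (gg a n 0 - x) \<le> 1 / real n" using close[of n] that by simp
      also have "\<dots> \<le> 1 / real (Suc N)" using that by (intro divide_left_mono) auto
      finally show ?thesis using N by (simp add: inverse_eq_divide)
    qed
    then show "\<exists>no. \<forall>n\<ge>no. norm (gg a n 0 - x) < r" by blast
  qed
  then have xv: "cfval a = x" unfolding cfval_def by (rule limI)
  have irr: "x \<notin> \<rat>"
  proof
    assume "x \<in> \<rat>"
    then obtain r s where rs: "s > 0" "x = of_int r / of_int s" by (rule Rats_cases') blast
    have key: "r * int (cf_q a m) = int (cf_p a m) * s" if m: "m > nat s" for m
    proof -
      have m1: "m \<ge> 1" using m rs by linarith
      let ?q = "real (cf_q a m)" and ?p = "real (cf_p a m)"
      have qm: "?q \<ge> real m" using q_ge[OF an, of m] by simp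
      have qs: "?q > real_of_int s" using qm m rs by linarith
      have q0: "?q > 0" using qs rs by linarith
      have "\<bar>gg a m 0 - x\<bar> \<le> \<bar>gg a m 0 - gg a m 1\<bar>"
        using betw_dist[OF _ xb[OF m1]] unfolding betw_def by auto
      also have "\<dots> = 1 / (?q * (?q + real (qm a m)))" using gg_len[OF an] by simp
      also have "\<dots> \<le> 1 / (?q * ?q)" using q0 by (intro divide_left_mono mult_left_mono) auto
      finally have b: "\<bar>?p / ?q - of_int r / of_int s\<bar> \<le> 1 / (?q * ?q)" using rs by (simp add: gg_def)
      have "?p / ?q - of_int r / of_int s = (?p * of_int s - of_int r * ?q) / (?q * of_int s)"
        using rs q0 by (simp add: field_simps)
      then have "\<bar>?p * of_int s - of_int r * ?q\<bar> / (?q * of_int s) \<le> 1 / (?q * ?q)"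
        using b rs q0 by (simp add: abs_div abs_mult)
      then have "\<bar>?p * of_int s - of_int r * ?q\<bar> * ?q \<le> of_int s"
        using rs q0 by (simp add: field_simps)
      also have "\<dots> < 1 * ?q" using qs by simp
      finally have "\<bar>?p * of_int s - of_int r * ?q\<bar> < 1" using q0 by (simp only: mult_less_cancel_right)
      moreover have int_eq: "?p * of_int s - of_int r * ?q = of_int (int (cf_p a m) * s - r * int (cf_q a m))"
        by simp
      ultimately have "\<bar>int (cf_p a m) * s - r * int (cf_q a m)\<bar> < 1"
        by (metis of_int_abs of_int_less_1_iff)
      then show ?thesis by simp
    qed
    let ?N = "Suc (nat s)"
    have k1: "r * int (cf_q a ?N) = int (cf_p a ?N) * s" by (rule key) simp
    have k2: "r * int (cf_q a (Suc ?N)) = int (cf_p a (Suc ?N)) * s" by (rule key) simp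
    have "int (cf_p a ?N) * int (cf_q a (Suc ?N)) * s = int (cf_p a (Suc ?N)) * int (cf_q a ?N) * s"
      using k1 k2 by (metis mult.commute mult.left_commute)
    then have "int (cf_p a ?N) * int (cf_q a (Suc ?N)) = int (cf_p a (Suc ?N)) * int (cf_q a ?N)"
      using rs by simp
    then have "real (cf_p a ?N) * real (cf_q a (Suc ?N)) = real (cf_p a (Suc ?N)) * real (cf_q a ?N)"
      by (metis of_int_of_nat_eq of_int_mult)
    moreover have "real (pm a (Suc ?N)) * real (cf_q a (Suc ?N)) - real (cf_p a (Suc ?N)) * real (qm a (Suc ?N)) = (-1) ^ Suc ?N"
      by (rule det)
    ultimately show False by (simp del: of_nat_Suc)
  qed
  have x01: "x \<in> {0<..<1}"
  proof -
    have b: "betw x (gg a 1 0) (gg a 1 1)" using xb by simp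
    have a11: "real (a 1) \<ge> 1" using a1 by simp
    have g0: "gg a 1 0 = 1 / real (a 1)" by (simp add: gg_def pm_def qm_def)
    have g1: "gg a 1 1 = 1 / (real (a 1) + 1)" by (simp add: gg_def pm_def qm_def)
    have p: "1 / (real (a 1) + 1) > 0" using a11 by simp
    have l1: "1 / real (a 1) \<le> 1" using a11 by simp
    have l2: "1 / (real (a 1) + 1) \<le> 1 / real (a 1)" using a11 by (simp add: frac_le)
    have "x \<ge> 1 / (real (a 1) + 1)" "x \<le> 1 / real (a 1)"
      using b l2 unfolding g0 g1 betw_def by (auto simp: min_def max_def)
    then have "0 < x" "x \<le> 1" using p l1 by linarith+
    moreover have "x \<noteq> 1" using irr by auto
    ultimately show ?thesis by auto
  qed
  have dig: "\<forall>i\<ge>1. cf_a i x = a i"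
  proof (intro allI impI)
    fix i :: nat assume i: "i \<ge> 1"
    have "\<forall>j\<in>{1..i}. cf_a j x = a j" using backward[of x i a] x01 irr an xb[OF i] by auto
    then show "cf_a i x = a i" using i by auto
  qed
  show ?thesis using xv x01 irr dig conv by auto
qed



lemma gauss_meas[measurable]: "gauss_map \<in> borel_measurable borel"
  unfolding gauss_map_def[abs_def] frac_def by measurable

lemma gauss_iter_meas[measurable]: "(gauss_map ^^ n) \<in> borel_measurable borel"
  by (induction n) auto

lemma cf_a_meas[measurable]: "cf_a n \<in> borel \<rightarrow>\<^sub>M count_space UNIV"
  unfolding cf_a_def[abs_def] by measurable

lemma cf_a_set2: "{x. P (cf_a n x) (cf_a m x)} \<in> sets borel"
proof -
  have "{x. P (cf_a n x) (cf_a m x)} = (\<Union>ij\<in>{ij. P (fst ij) (snd ij)}. {x. cf_a n x = fst ij} \<inter> {x. cf_a m x = snd ij})"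
    by auto
  also have "\<dots> \<in> sets borel"
  proof (rule sets.countable_UN'')
    show "countable {ij::nat\<times>nat. P (fst ij) (snd ij)}" by simp
    fix ij :: "nat \<times> nat"
    have "{x \<in> space borel. cf_a n x = fst ij} \<in> sets borel" by measurable
    moreover have "{x \<in> space borel. cf_a m x = snd ij} \<in> sets borel" by measurable
    ultimately show "{x. cf_a n x = fst ij} \<inter> {x. cf_a m x = snd ij} \<in> sets borel" by auto
  qed
  finally show ?thesis .
qed


lemma Rats_borel: "\<rat> \<in> sets (borel :: real measure)"
proof -
  have "\<rat> = (\<Union>r\<in>\<rat>. {r::real})" by auto
  also have "\<dots> \<in> sets borel" by (rule sets.countable_UN'') (auto simp: countable_rat)
  finally show ?thesis .
qed

lemma Lambda_borel: "Lambda_set V W L \<in> sets borel"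
proof -
  define H where "H = (\<lambda>kn::nat\<times>nat. {x. (fst kn \<ge> 1 \<and> snd kn \<in> V (fst kn) \<longrightarrow> cf_a (snd kn) x \<in> L (snd kn)) \<and>
     (fst kn \<ge> 1 \<and> snd kn \<in> W (fst kn) \<longrightarrow> cf_a (snd kn) x = cf_a (Max (V (fst kn))) x + snd kn - Max (V (fst kn)))})"
  have "Lambda_set V W L = ({0<..<1} - \<rat>) \<inter> (\<Inter>kn\<in>UNIV. H kn)"
    unfolding Lambda_set_def H_def by auto
  moreover have "H kn \<in> sets borel" for kn
    unfolding H_def by (rule cf_a_set2)
  then have "(\<Inter>kn\<in>UNIV. H kn) \<in> sets borel" by (intro sets.countable_INT'') auto
  moreover have "{0<..<1::real} - \<rat> \<in> sets borel" using Rats_borel by auto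
  ultimately show ?thesis by auto
qed

primrec bseq :: "nat set \<Rightarrow> (nat \<Rightarrow> nat) \<Rightarrow> nat \<Rightarrow> nat" where
  "bseq Ws w 0 = 1"
| "bseq Ws w (Suc n) = (if Suc n \<in> Ws then bseq Ws w n + 1 else max 1 (w (Suc n)))"

lemma bseq_ge1: "bseq Ws w n \<ge> 1"
  by (cases n) auto

lemma meas_bseq:
  fixes PP :: "nat \<Rightarrow> nat pmf"
  shows "(\<lambda>w. real (bseq Ws w n)) \<in> borel_measurable (PiM UNIV (\<lambda>i. measure_pmf (PP i)))"
proof (induction n)
  case 0 then show ?case by simp
next
  case (Suc n)
  have c: "(\<lambda>w. real (max 1 (w (Suc n)))) \<in> borel_measurable (PiM UNIV (\<lambda>i. measure_pmf (PP i)))"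
    by (rule measurable_compose[OF measurable_component_singleton[of "Suc n" UNIV]]) auto
  show ?case
  proof (cases "Suc n \<in> Ws")
    case True then show ?thesis using Suc by simp
  next
    case False then show ?thesis using c by simp
  qed
qed

lemma meas_cf:
  assumes "\<And>n. (\<lambda>w. real (F w n)) \<in> borel_measurable N"
  shows "(\<lambda>w. real (cf_p (F w) n)) \<in> borel_measurable N \<and> (\<lambda>w. real (cf_q (F w) n)) \<in> borel_measurable N"
proof -
  have "((\<lambda>w. real (cf_p (F w) n)) \<in> borel_measurable N \<and> (\<lambda>w. real (cf_q (F w) n)) \<in> borel_measurable N) \<and>
        ((\<lambda>w. real (cf_p (F w) (Suc n))) \<in> borel_measurable N \<and> (\<lambda>w. real (cf_q (F w) (Suc n))) \<in> borel_measurable N)"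
  proof (induction n)
    case 0 then show ?case using assms[of 1] by simp
  next
    case (Suc n)
    then show ?case using assms[of "Suc (Suc n)"]
      by (simp add: borel_measurable_add borel_measurable_times)
  qed
  then show ?thesis by blast
qed



lemma pow_add_ge: "t \<ge> 1 \<Longrightarrow> (a + b) ^ t \<ge> a ^ t + (b::nat) ^ t"
proof (induction t)
  case 0 then show ?case by simp
next
  case (Suc t)
  show ?case
  proof (cases "t = 0")
    case True then show ?thesis by simp
  next
    case False
    then have ih: "(a + b) ^ t \<ge> a ^ t + b ^ t" using Suc by simp
    have A: "(a + b) * (a ^ t + b ^ t) \<le> (a + b) ^ Suc t"
      using ih by (simp add: mult_left_mono)
    have B: "a ^ Suc t + b ^ Suc t \<le> (a + b) * (a ^ t + b ^ t)" by (simp add: algebra_simps)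
    show ?thesis using order_trans[OF B A] .
  qed
qed

lemma pow_ge_self: "t \<ge> 1 \<Longrightarrow> (b::nat) \<le> b ^ t"
  by (cases "b = 0") (auto simp: self_le_power)

lemma cyl:
  assumes "1 \<notin> Ws" "\<forall>i\<in>{1..n}. i \<in> Ws \<longrightarrow> a i = a (i - 1) + 1" "\<forall>i\<in>{1..n}. w i \<ge> 1"
  shows "(\<forall>i\<in>{1..n}. bseq Ws w i = a i) \<longleftrightarrow> (\<forall>i\<in>{1..n} - Ws. w i = a i)"
  using assms(2,3)
proof (induction n)
  case 0 then show ?case by simp
next
  case (Suc n)
  have IH: "(\<forall>i\<in>{1..n}. bseq Ws w i = a i) \<longleftrightarrow> (\<forall>i\<in>{1..n} - Ws. w i = a i)"
    using Suc by auto
  have split1: "(\<forall>i\<in>{1..Suc n}. P i) \<longleftrightarrow> (\<forall>i\<in>{1..n}. P i) \<and> P (Suc n)" for P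
    by (simp add: atLeastAtMostSuc_conv conj_commute)
  show ?case
  proof (cases "Suc n \<in> Ws")
    case True
    then have n1: "n \<ge> 1" using assms(1) by (cases n) auto
    have an: "a (Suc n) = a n + 1" using Suc.prems True by auto
    have "(\<forall>i\<in>{1..Suc n}. bseq Ws w i = a i) \<longleftrightarrow> (\<forall>i\<in>{1..n}. bseq Ws w i = a i)"
      unfolding split1 using True an n1 by auto
    moreover have "(\<forall>i\<in>{1..Suc n} - Ws. w i = a i) \<longleftrightarrow> (\<forall>i\<in>{1..n} - Ws. w i = a i)"
      using True by (auto simp: le_Suc_eq)
    ultimately show ?thesis using IH by simp
  next
    case False
    have w1: "w (Suc n) \<ge> 1" using Suc.prems by auto
    have "(\<forall>i\<in>{1..Suc n}. bseq Ws w i = a i) \<longleftrightarrow> (\<forall>i\<in>{1..n}. bseq Ws w i = a i) \<and> w (Suc n) = a (Suc n)"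
      unfolding split1 using False w1 by (simp add: max_def)
    moreover have "(\<forall>i\<in>{1..Suc n} - Ws. w i = a i) \<longleftrightarrow> (\<forall>i\<in>{1..n} - Ws. w i = a i) \<and> w (Suc n) = a (Suc n)"
      using False by (auto simp: atLeastAtMostSuc_conv)
    ultimately show ?thesis using IH by simp
  qed
qed

locale VWL =
  fixes V W L :: "nat \<Rightarrow> nat set"
  assumes V_int: "\<forall>k\<ge>1. \<exists>l u. l \<le> u \<and> V k = {l..u}"
    and W_int: "\<forall>k\<ge>1. \<exists>l u. l \<le> u \<and> W k = {l..u}"
    and cover: "(\<Union>k\<in>{1..}. V k \<union> W k) = {1..}"
    and disj: "\<forall>k\<ge>1. \<forall>m\<ge>1. (k \<noteq> m \<longrightarrow> V k \<inter> V m = {} \<and> W k \<inter> W m = {})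
                 \<and> V k \<inter> W m = {}"
    and VW: "\<forall>k\<ge>1. Max (V k) + 1 = Min (W k)"
    and WV: "\<forall>k\<ge>1. Max (W k) + 1 = Min (V (Suc k))"
    and L_int: "\<forall>n\<ge>1. \<exists>l u. 1 \<le> l \<and> l \<le> u \<and> L n = {l..u}"
begin

definition Wall where "Wall = (\<Union>k\<in>{1..}. W k)"

lemma V_props: "k \<ge> 1 \<Longrightarrow> finite (V k) \<and> V k \<noteq> {} \<and> V k = {Min (V k)..Max (V k)}"
proof -
  assume "k \<ge> 1"
  then obtain l u where "l \<le> u" "V k = {l..u}" using V_int by blast
  moreover have "Min {l..u} = l" "Max {l..u} = u" using \<open>l \<le> u\<close> by (auto intro: Min_eqI Max_eqI)
  ultimately show ?thesis by auto
qed

lemma W_props: "k \<ge> 1 \<Longrightarrow> finite (W k) \<and> W k \<noteq> {} \<and> W k = {Min (W k)..Max (W k)}"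
proof -
  assume "k \<ge> 1"
  then obtain l u where "l \<le> u" "W k = {l..u}" using W_int by blast
  moreover have "Min {l..u} = l" "Max {l..u} = u" using \<open>l \<le> u\<close> by (auto intro: Min_eqI Max_eqI)
  ultimately show ?thesis by auto
qed

lemma V_mem: "k \<ge> 1 \<Longrightarrow> i \<in> V k \<longleftrightarrow> Min (V k) \<le> i \<and> i \<le> Max (V k)"
  using V_props by (metis atLeastAtMost_iff)
lemma W_mem: "k \<ge> 1 \<Longrightarrow> i \<in> W k \<longleftrightarrow> Min (W k) \<le> i \<and> i \<le> Max (W k)"
  using W_props by (metis atLeastAtMost_iff)
lemma V_minmax: "k \<ge> 1 \<Longrightarrow> Min (V k) \<le> Max (V k) \<and> Min (V k) \<in> V k \<and> Max (V k) \<in> V k"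
  using V_props by (metis Max_in Min_in Min_le)
lemma W_minmax: "k \<ge> 1 \<Longrightarrow> Min (W k) \<le> Max (W k) \<and> Min (W k) \<in> W k \<and> Max (W k) \<in> W k"
  using W_props by (metis Max_in Min_in Min_le)

lemma pos_V: "k \<ge> 1 \<Longrightarrow> i \<in> V k \<Longrightarrow> i \<ge> 1"
  using cover by auto
lemma pos_W: "k \<ge> 1 \<Longrightarrow> i \<in> W k \<Longrightarrow> i \<ge> 1"
  using cover by auto

lemma minV_mono: "1 \<le> k \<Longrightarrow> k \<le> m \<Longrightarrow> Min (V k) \<le> Min (V m)"
proof (induction m)
  case 0 then show ?case by simp
next
  case (Suc m)
  show ?case
  proof (cases "k = Suc m")
    case True then show ?thesis by simp
  next
    case False
    then have km: "k \<le> m" "m \<ge> 1" using Suc by auto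
    have "Min (V m) \<le> Max (V m)" "Min (W m) \<le> Max (W m)" using V_minmax W_minmax km by auto
    then have "Min (V m) < Min (V (Suc m))" using VW WV km by (metis add_le_less_mono le_add1 less_add_one order_le_less_trans)
    then show ?thesis using Suc km by simp
  qed
qed

lemma ordVW: "k \<ge> 1 \<Longrightarrow> i \<in> V k \<Longrightarrow> j \<in> W k \<Longrightarrow> i < j"
  using V_mem W_mem VW by (metis add_le_less_mono le_add1 less_add_one not_le order_le_less_trans)

lemma le_maxW: "k \<ge> 1 \<Longrightarrow> i \<in> V k \<union> W k \<Longrightarrow> i \<le> Max (W k)"
  using ordVW W_minmax W_mem by (metis Un_iff less_imp_le_nat)

lemma ge_minV: "k \<ge> 1 \<Longrightarrow> j \<in> V k \<union> W k \<Longrightarrow> Min (V k) \<le> j"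
  using ordVW V_minmax V_mem by (metis Un_iff less_imp_le_nat)

lemma ordlt: "1 \<le> k \<Longrightarrow> k < m \<Longrightarrow> i \<in> V k \<union> W k \<Longrightarrow> j \<in> V m \<union> W m \<Longrightarrow> i < j"
proof -
  assume a: "1 \<le> k" "k < m" "i \<in> V k \<union> W k" "j \<in> V m \<union> W m"
  have "i \<le> Max (W k)" using le_maxW a by auto
  also have "\<dots> < Min (V (Suc k))" using WV a by auto
  also have "\<dots> \<le> Min (V m)" using minV_mono a by auto
  also have "\<dots> \<le> j" using ge_minV a by auto
  finally show "i < j" .
qed

lemma V_notW: "k \<ge> 1 \<Longrightarrow> i \<in> V k \<Longrightarrow> i \<notin> Wall"
  using disj unfolding Wall_def by blast

lemma notW_V: "i \<ge> 1 \<Longrightarrow> i \<notin> Wall \<Longrightarrow> \<exists>k\<ge>1. i \<in> V k"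
  using cover unfolding Wall_def by blast

lemma W_pred: "k \<ge> 1 \<Longrightarrow> i \<in> W k \<Longrightarrow> i \<ge> 2 \<and> (i - 1 = Max (V k) \<or> i - 1 \<in> W k) \<and> Max (V k) < i"
proof -
  assume a: "k \<ge> 1" "i \<in> W k"
  have m: "Max (V k) \<ge> 1" using pos_V V_minmax a by blast
  have "Min (W k) \<le> i" "i \<le> Max (W k)" using W_mem a by auto
  then show ?thesis using VW a m W_mem[of k "i - 1"] by auto
qed

lemma one_notW: "1 \<notin> Wall"
  using W_pred unfolding Wall_def by fastforce

lemma lam_succ: "x \<in> Lambda_set V W L \<Longrightarrow> k \<ge> 1 \<Longrightarrow> i \<in> W k \<Longrightarrow> cf_a i x = cf_a (i - 1) x + 1"
proof -
  assume a: "x \<in> Lambda_set V W L" "k \<ge> 1" "i \<in> W k"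
  have f: "\<forall>n\<in>W k. cf_a n x = cf_a (Max (V k)) x + n - Max (V k)" using a unfolding Lambda_set_def by auto
  have p: "i \<ge> 2 \<and> (i - 1 = Max (V k) \<or> i - 1 \<in> W k) \<and> Max (V k) < i" using W_pred a by blast
  show ?thesis
  proof (cases "i - 1 = Max (V k)")
    case True then show ?thesis using f a p by auto
  next
    case False
    then have "i - 1 \<in> W k" using p by auto
    then have "cf_a (i - 1) x = cf_a (Max (V k)) x + (i - 1) - Max (V k)" using f by auto
    then show ?thesis using f a p False by auto
  qed
qed

lemma lam_L: "x \<in> Lambda_set V W L \<Longrightarrow> i \<ge> 1 \<Longrightarrow> i \<notin> Wall \<Longrightarrow> cf_a i x \<in> L i"
  using notW_V unfolding Lambda_set_def by blast

lemma formula_from_succ: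
  assumes k: "k \<ge> 1" and s: "\<forall>i\<in>W k. f i = f (i - 1) + (1::nat)"
  shows "n \<in> W k \<Longrightarrow> f n = f (Max (V k)) + n - Max (V k)"
proof -
  have "n \<in> W k \<longrightarrow> f n = f (Max (V k)) + (n - Max (V k))"
  proof (induction n)
    case 0 then show ?case using pos_W k by fastforce
  next
    case (Suc n)
    show ?case
    proof
      assume sn: "Suc n \<in> W k"
      have p: "Suc n \<ge> 2 \<and> (Suc n - 1 = Max (V k) \<or> Suc n - 1 \<in> W k) \<and> Max (V k) < Suc n"
        using W_pred[OF k sn] .
      have fs: "f (Suc n) = f n + 1" using s sn by auto
      show "f (Suc n) = f (Max (V k)) + (Suc n - Max (V k))"
      proof (cases "n = Max (V k)")
        case True then show ?thesis using fs by simp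
      next
        case False
        then have "n \<in> W k" using p by auto
        then have "f n = f (Max (V k)) + (n - Max (V k))" using Suc by blast
        then show ?thesis using fs p False by auto
      qed
    qed
  qed
  moreover have "n \<in> W k \<Longrightarrow> Max (V k) < n" using W_pred k by blast
  ultimately show "n \<in> W k \<Longrightarrow> f n = f (Max (V k)) + n - Max (V k)" by auto
qed

lemma partb:
  assumes t: "t \<ge> 2" and Ln: "\<forall>n\<ge>1. L n = {(2*n)^t..<(2*n+1)^t}"
  shows "Lambda_set V W L \<subseteq> J_set"
proof
  fix x assume x: "x \<in> Lambda_set V W L"
  have x01: "x \<in> {0<..<1} - \<rat>" using x unfolding Lambda_set_def by auto
  have "cf_a n x < cf_a (Suc n) x" if n1: "n \<ge> 1" for n
  proof (cases "Suc n \<in> Wall")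
    case True
    then obtain k where "k \<ge> 1" "Suc n \<in> W k" unfolding Wall_def by auto
    then show ?thesis using lam_succ[OF x] by fastforce
  next
    case False
    have "cf_a (Suc n) x \<in> L (Suc n)" using lam_L[OF x _ False] by simp
    then have big: "cf_a (Suc n) x \<ge> (2 * n + 2) ^ t" using Ln by auto
    show ?thesis
    proof (cases "n \<in> Wall")
      case False
      have "cf_a n x \<in> L n" using lam_L[OF x n1 False] .
      then have "cf_a n x < (2 * n + 1) ^ t" using Ln n1 by auto
      also have "\<dots> \<le> (2 * n + 2) ^ t" by (intro power_mono) auto
      finally show ?thesis using big by simp
    next
      case True
      then obtain k where k: "k \<ge> 1" "n \<in> W k" unfolding Wall_def by auto
      let ?v = "Max (V k)"
      have vV: "?v \<in> V k" using V_minmax k by blast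
      have v1: "?v \<ge> 1" using pos_V k vV by blast
      have vn: "?v < n" using W_pred k by blast
      have "cf_a ?v x \<in> L ?v" using lam_L[OF x v1 V_notW[OF k(1) vV]] .
      then have cv: "cf_a ?v x < (2 * ?v + 1) ^ t" using Ln v1 by auto
      have cn: "cf_a n x = cf_a ?v x + n - ?v" using x k unfolding Lambda_set_def by auto
      have "(2 * n + 2) ^ t = ((2 * ?v + 1) + (2 * n + 1 - 2 * ?v)) ^ t" using vn by (simp add: algebra_simps)
      also have "\<dots> \<ge> (2 * ?v + 1) ^ t + (2 * n + 1 - 2 * ?v) ^ t" using t by (intro pow_add_ge) auto
      finally have "(2 * n + 2) ^ t \<ge> (2 * ?v + 1) ^ t + (2 * n + 1 - 2 * ?v)"
        using pow_ge_self[of t "2 * n + 1 - 2 * ?v"] t by linarith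
      then have "cf_a n x < (2 * n + 2) ^ t" using cn cv vn by linarith
      then show ?thesis using big by simp
    qed
  qed
  then show "x \<in> J_set" unfolding J_set_def using x01 by auto
qed

end



context VWL begin

definition Lp :: "nat \<Rightarrow> nat set" where "Lp i = (if i \<ge> 1 then L i else {1})"
definition PP :: "nat \<Rightarrow> nat pmf" where "PP i = pmf_of_set (Lp i)"
definition Om :: "(nat \<Rightarrow> nat) measure" where "Om = PiM UNIV (\<lambda>i. measure_pmf (PP i))"
definition ff :: "(nat \<Rightarrow> nat) \<Rightarrow> real" where "ff w = cfval (bseq Wall w)"
definition mu :: "real measure" where "mu = distr Om (restrict_space borel {0..1}) ff"

lemma Lp_props: "finite (Lp i) \<and> Lp i \<noteq> {} \<and> (\<forall>j\<in>Lp i. j \<ge> 1)"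
proof (cases "i \<ge> 1")
  case True
  then obtain l u where "1 \<le> l" "l \<le> u" "L i = {l..u}" using L_int by blast
  then show ?thesis using True unfolding Lp_def by auto
qed (auto simp: Lp_def)

lemma set_PP: "set_pmf (PP i) = Lp i"
  unfolding PP_def using Lp_props by (simp add: set_pmf_of_set)

lemma pmf_PP: "x \<in> Lp i \<Longrightarrow> measure (measure_pmf (PP i)) {x} = 1 / real (card (Lp i))"
  unfolding PP_def using Lp_props by (simp add: measure_pmf_single pmf_of_set)

sublocale PS: product_prob_space "\<lambda>i. measure_pmf (PP i)" UNIV
  by unfold_locales

lemma ff_props: "ff w \<in> {0<..<1} - \<rat> \<and> (\<forall>i\<ge>1. cf_a i (ff w) = bseq Wall w i) \<and>
   (\<lambda>n. gg (bseq Wall w) n 0) \<longlonglongrightarrow> ff w"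
proof -
  have "\<forall>i\<ge>1. bseq Wall w i \<ge> 1" using bseq_ge1 by blast
  then show ?thesis unfolding ff_def by (rule cf_exists)
qed

lemma ff_meas: "ff \<in> borel_measurable Om"
proof (rule borel_measurable_LIMSEQ_metric)
  fix n
  have "(\<lambda>w. real (cf_p (bseq Wall w) n)) \<in> borel_measurable Om \<and> (\<lambda>w. real (cf_q (bseq Wall w) n)) \<in> borel_measurable Om"
    unfolding Om_def by (rule meas_cf) (rule meas_bseq)
  then show "(\<lambda>w. gg (bseq Wall w) n 0) \<in> borel_measurable Om"
    unfolding gg_def by (simp add: borel_measurable_divide)
next
  fix w show "(\<lambda>n. gg (bseq Wall w) n 0) \<longlonglongrightarrow> ff w" using ff_props by blast
qed

lemma ff_meas2: "ff \<in> Om \<rightarrow>\<^sub>M restrict_space borel {0..1}"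
proof (rule measurable_restrict_space2)
  have "ff w \<in> {0..1}" for w using ff_props[of w] by auto
  then show "ff \<in> space Om \<rightarrow> {0..1}" by auto
qed (rule ff_meas)

lemma AE_good: "AE w in Om. \<forall>i. w i \<in> Lp i"
  unfolding Om_def
  by (subst AE_all_countable) (auto intro!: PS.AE_component simp: AE_measure_pmf_iff set_PP)

lemma good_Lambda:
  assumes g: "\<forall>i. w i \<in> Lp i"
  shows "ff w \<in> Lambda_set V W L"
proof -
  let ?b = "bseq Wall w"
  have d: "\<forall>i\<ge>1. cf_a i (ff w) = ?b i" using ff_props by blast
  have bV: "?b n = w n" if n1: "n \<ge> 1" "n \<notin> Wall" for n
  proof -
    obtain m where "n = Suc m" using n1 by (cases n) auto
    moreover have "w n \<ge> 1" using g Lp_props by blast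
    ultimately show ?thesis using n1 by simp
  qed
  have c1: "\<forall>k\<ge>1. \<forall>n\<in>V k. cf_a n (ff w) \<in> L n"
  proof (intro allI impI ballI)
    fix k n assume k: "k \<ge> 1" and n: "n \<in> V k"
    have n1: "n \<ge> 1" using pos_V k n by blast
    have "cf_a n (ff w) = w n" using d bV[OF n1 V_notW[OF k n]] n1 by simp
    then show "cf_a n (ff w) \<in> L n" using g n1 unfolding Lp_def by (metis)
  qed
  have c2: "\<forall>k\<ge>1. \<forall>n\<in>W k. cf_a n (ff w) = cf_a (Max (V k)) (ff w) + n - Max (V k)"
  proof (intro allI impI ballI)
    fix k n assume k: "k \<ge> 1" and n: "n \<in> W k"
    show "cf_a n (ff w) = cf_a (Max (V k)) (ff w) + n - Max (V k)"
    proof (rule formula_from_succ[OF k _ n])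
      show "\<forall>i\<in>W k. cf_a i (ff w) = cf_a (i - 1) (ff w) + 1"
      proof
        fix i assume i: "i \<in> W k"
        have i2: "i \<ge> 2" using W_pred k i by blast
        then obtain m where m: "i = Suc m" "m \<ge> 1" by (cases i) auto
        have iW: "i \<in> Wall" using i k unfolding Wall_def by auto
        have "cf_a i (ff w) = ?b i" using d i2 by simp
        also have "\<dots> = ?b m + 1" using m iW by simp
        also have "?b m = cf_a m (ff w)" using d m by simp
        finally show "cf_a i (ff w) = cf_a (i - 1) (ff w) + 1" using m by simp
      qed
    qed
  qed
  show ?thesis unfolding Lambda_set_def using ff_props c1 c2 by blast
qed

lemma mu_prob: "prob_space mu"
  unfolding mu_def Om_def by (rule PS.prob_space_distr) (use ff_meas2 Om_def in simp)

lemma sets_mu: "sets mu = sets (restrict_space borel {0..1::real})"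
  unfolding mu_def by simp

lemma Lambda_sets: "Lambda_set V W L \<in> sets mu"
  unfolding sets_mu using Lambda_borel
  by (subst sets_restrict_space_iff) (auto simp: Lambda_set_def)

lemma mu_Lambda: "emeasure mu (Lambda_set V W L) = 1"
proof -
  have "emeasure mu (Lambda_set V W L) = emeasure Om (ff -` Lambda_set V W L \<inter> space Om)"
    unfolding mu_def using ff_meas2 Lambda_sets sets_mu by (subst emeasure_distr) auto
  also have "\<dots> = 1"
  proof -
    interpret O: prob_space Om unfolding Om_def by (rule PS.prob_space_axioms)
    show ?thesis
    proof (rule O.emeasure_eq_1_AE)
      show "ff -` Lambda_set V W L \<inter> space Om \<in> sets Om"
        using ff_meas2 Lambda_sets sets_mu by (metis measurable_sets)
      show "AE x in Om. x \<in> ff -` Lambda_set V W L \<inter> space Om"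
        using AE_good AE_space by eventually_elim (auto intro: good_Lambda)
    qed
  qed
  finally show ?thesis .
qed


lemma fund_sub: "n \<ge> 1 \<Longrightarrow> \<forall>i\<in>{1..n}. a i \<ge> 1 \<Longrightarrow> fund_interval n a \<subseteq> {0..1}"
proof -
  assume n1: "n \<ge> 1" and a1: "\<forall>i\<in>{1..n}. a i \<ge> 1"
  have q: "cf_q a n \<ge> 1" "cf_p a n \<le> cf_q a n" using q_pos[OF a1] p_le_q[OF a1] by auto
  have a1': "\<forall>i\<in>{1..n-1}. a i \<ge> 1" using a1 by auto
  have q': "cf_p a (n - 1) \<le> cf_q a (n - 1)" using p_le_q[OF a1'] .
  have e1: "real (cf_p a n) / real (cf_q a n) \<in> {0..1}" using q by auto
  have e2: "real (cf_p a n + cf_p a (n - 1)) / real (cf_q a n + cf_q a (n - 1)) \<in> {0..1}"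
    using q q' by auto
  show ?thesis unfolding fund_interval_def Let_def using e1 e2 by (auto simp: min_def max_def)
qed

lemma fund_sets: "n \<ge> 1 \<Longrightarrow> \<forall>i\<in>{1..n}. a i \<ge> 1 \<Longrightarrow> fund_interval n a \<in> sets mu"
proof -
  assume n1: "n \<ge> 1" and a1: "\<forall>i\<in>{1..n}. a i \<ge> 1"
  have "closed (fund_interval n a)" unfolding fund_interval_def Let_def by simp
  then have "fund_interval n a \<in> sets borel" by (rule borel_closed)
  then show ?thesis unfolding sets_mu using fund_sub[OF n1 a1]
    by (subst sets_restrict_space_iff) auto
qed

lemma mu_fund:
  assumes n1: "n \<ge> 1" and a1: "\<forall>i\<in>{1..n}. a i \<ge> 1"
    and ne: "fund_interval n a \<inter> Lambda_set V W L \<noteq> {}"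
  shows "measure mu (fund_interval n a) = (\<Prod>i\<in>{1..n} - Wall. 1 / real (card (L i)))"
proof -
  let ?I = "fund_interval n a"
  let ?F = "{1..n} - Wall"
  obtain y where y: "y \<in> ?I" "y \<in> Lambda_set V W L" using ne by blast
  have y01: "y \<in> {0<..<1} - \<rat>" using y unfolding Lambda_set_def by auto
  have ya: "\<forall>i\<in>{1..n}. cf_a i y = a i" using fund_iff[OF n1 a1 y01] y by blast
  have cons1: "\<forall>i\<in>{1..n}. i \<in> Wall \<longrightarrow> a i = a (i - 1) + 1"
  proof (intro ballI impI)
    fix i assume i: "i \<in> {1..n}" "i \<in> Wall"
    then obtain k where k: "k \<ge> 1" "i \<in> W k" unfolding Wall_def by auto
    have "i \<ge> 2" using W_pred k by blast
    then have "i - 1 \<in> {1..n}" using i by auto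
    then show "a i = a (i - 1) + 1" using lam_succ[OF y(2) k] ya i by auto
  qed
  have cons2: "\<forall>i\<in>?F. a i \<in> Lp i"
  proof
    fix i assume i: "i \<in> ?F"
    then have i1: "i \<ge> 1" "i \<le> n" "i \<notin> Wall" by auto
    have "cf_a i y \<in> L i" using lam_L[OF y(2) i1(1) i1(3)] .
    moreover have "cf_a i y = a i" using ya i1 by auto
    ultimately have "a i \<in> L i" by simp
    then show "a i \<in> Lp i" using i1 unfolding Lp_def by auto
  qed
  have mI: "measure mu ?I = measure Om (ff -` ?I \<inter> space Om)"
    unfolding mu_def using ff_meas2 fund_sets[OF n1 a1] sets_mu by (subst measure_distr) auto
  define B where "B = prod_emb UNIV (\<lambda>i. measure_pmf (PP i)) ?F (\<Pi>\<^sub>E i\<in>?F. {a i})"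
  have Bsets: "B \<in> sets Om" unfolding B_def Om_def by (rule sets_PiM_I) auto
  have Asets: "ff -` ?I \<inter> space Om \<in> sets Om"
    using ff_meas2 fund_sets[OF n1 a1] sets_mu by (metis measurable_sets)
  have Bmem: "w \<in> B \<longleftrightarrow> (\<forall>i\<in>?F. w i = a i)" for w
    unfolding B_def by (auto simp: prod_emb_iff PiE_iff extensional_def)
  have "AE w in Om. w \<in> ff -` ?I \<inter> space Om \<longleftrightarrow> w \<in> B"
    using AE_good AE_space
  proof eventually_elim
    case (elim w)
    have "w \<in> ff -` ?I \<longleftrightarrow> (\<forall>i\<in>{1..n}. cf_a i (ff w) = a i)"
      using fund_iff[OF n1 a1] ff_props by blast
    also have "\<dots> \<longleftrightarrow> (\<forall>i\<in>{1..n}. bseq Wall w i = a i)" using ff_props by auto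
    also have "\<dots> \<longleftrightarrow> (\<forall>i\<in>?F. w i = a i)"
      by (rule cyl[OF one_notW cons1]) (use elim Lp_props in blast)
    finally show ?case using Bmem elim by auto
  qed
  then have "measure Om (ff -` ?I \<inter> space Om) = measure Om B"
    by (rule measure_eq_AE) (use Asets Bsets in auto)
  also have "\<dots> = (\<Prod>i\<in>?F. measure (measure_pmf (PP i)) {a i})"
    unfolding B_def Om_def by (rule PS.measure_PiM_emb) auto
  also have "\<dots> = (\<Prod>i\<in>?F. 1 / real (card (L i)))"
    by (rule prod.cong) (use cons2 pmf_PP in \<open>auto simp: Lp_def\<close>)
  finally show ?thesis using mI by simp
qed

end



context VWL begin

lemma NW_V1: "n \<in> V 1 \<Longrightarrow> {1..n} - Wall = {1..n}"
proof -
  assume n: "n \<in> V 1"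
  have "i \<notin> W m" if "i \<in> {1..n}" "m \<ge> 1" for i m
  proof
    assume iW: "i \<in> W m"
    have "n < i"
    proof (cases "m = 1")
      case True then show ?thesis using ordVW[of 1 n i] n iW by simp
    next
      case False then show ?thesis using ordlt[of 1 m n i] n iW that by simp
    qed
    then show False using that by simp
  qed
  then show ?thesis unfolding Wall_def by auto
qed

lemma NW_W: "k \<ge> 1 \<Longrightarrow> n \<in> W k \<Longrightarrow> {1..n} - Wall = (\<Union>m\<in>{1..k}. V m)"
proof -
  assume k: "k \<ge> 1" and n: "n \<in> W k"
  show ?thesis
  proof
    show "{1..n} - Wall \<subseteq> (\<Union>m\<in>{1..k}. V m)"
    proof
      fix i assume i: "i \<in> {1..n} - Wall"
      then obtain m where m: "m \<ge> 1" "i \<in> V m" using notW_V by auto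
      have "m \<le> k"
      proof (rule ccontr)
        assume "\<not> m \<le> k"
        then have "n < i" using ordlt[of k m n i] k n m by auto
        then show False using i by auto
      qed
      then show "i \<in> (\<Union>m\<in>{1..k}. V m)" using m by auto
    qed
  next
    show "(\<Union>m\<in>{1..k}. V m) \<subseteq> {1..n} - Wall"
    proof
      fix i assume "i \<in> (\<Union>m\<in>{1..k}. V m)"
      then obtain m where m: "1 \<le> m" "m \<le> k" "i \<in> V m" by auto
      have "i < n"
      proof (cases "m = k")
        case True then show ?thesis using ordVW m n by auto
      next
        case False then show ?thesis using ordlt[of m k i n] m n by auto
      qed
      moreover have "i \<ge> 1" using pos_V m by blast
      moreover have "i \<notin> Wall" using V_notW m by blast
      ultimately show "i \<in> {1..n} - Wall" by auto
    qed
  qed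
qed

lemma NW_V: "k \<ge> 1 \<Longrightarrow> n \<in> V (Suc k) \<Longrightarrow> {1..n} - Wall = (\<Union>m\<in>{1..k}. V m) \<union> {Min (V (Suc k))..n}"
proof -
  assume k: "k \<ge> 1" and n: "n \<in> V (Suc k)"
  show ?thesis
  proof
    show "{1..n} - Wall \<subseteq> (\<Union>m\<in>{1..k}. V m) \<union> {Min (V (Suc k))..n}"
    proof
      fix i assume i: "i \<in> {1..n} - Wall"
      then obtain m where m: "m \<ge> 1" "i \<in> V m" using notW_V by auto
      have "m \<le> Suc k"
      proof (rule ccontr)
        assume "\<not> m \<le> Suc k"
        then have "n < i" using ordlt[of "Suc k" m n i] k n m by auto
        then show False using i by auto
      qed
      moreover have "m = Suc k \<Longrightarrow> i \<in> {Min (V (Suc k))..n}" using m i V_mem by auto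
      ultimately show "i \<in> (\<Union>m\<in>{1..k}. V m) \<union> {Min (V (Suc k))..n}" using m by (auto simp: le_Suc_eq)
    qed
  next
    show "(\<Union>m\<in>{1..k}. V m) \<union> {Min (V (Suc k))..n} \<subseteq> {1..n} - Wall"
    proof
      fix i assume "i \<in> (\<Union>m\<in>{1..k}. V m) \<union> {Min (V (Suc k))..n}"
      then consider (a) m where "1 \<le> m" "m \<le> k" "i \<in> V m" | (b) "i \<in> {Min (V (Suc k))..n}" by auto
      then show "i \<in> {1..n} - Wall"
      proof cases
        case a
        have "i < n" using ordlt[of m "Suc k" i n] a n by auto
        moreover have "i \<ge> 1" using pos_V a by blast
        moreover have "i \<notin> Wall" using V_notW a by blast
        ultimately show ?thesis by auto
      next
        case b
        have "i \<in> V (Suc k)" using b V_mem[of "Suc k"] n by auto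
        have "i \<ge> 1" using pos_V[of "Suc k" i] \<open>i \<in> V (Suc k)\<close> by simp
        moreover have "i \<notin> Wall" using V_notW[of "Suc k" i] \<open>i \<in> V (Suc k)\<close> by simp
        ultimately show ?thesis using b by auto
      qed
    qed
  qed
qed

lemma prod_UV: "(\<Prod>i\<in>(\<Union>m\<in>{1..k}. V m). f i) = (\<Prod>m=1..k. \<Prod>i\<in>V m. f i)"
  by (rule prod.UNION_disjoint) (use V_props disj in auto)

lemma mu_cases:
  assumes n1: "n \<ge> 1" and a1: "\<forall>i\<in>{1..n}. a i \<ge> 1"
    and ne: "fund_interval n a \<inter> Lambda_set V W L \<noteq> {}"
  shows "(n \<in> V 1 \<longrightarrow>
              measure mu (fund_interval n a) = (\<Prod>i=1..n. 1 / real (card (L i)))) \<and>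
           (\<forall>k\<ge>1. n \<in> W k \<longrightarrow>
              measure mu (fund_interval n a) =
                (\<Prod>m=1..k. \<Prod>i\<in>V m. 1 / real (card (L i)))) \<and>
           (\<forall>k\<ge>1. n \<in> V (Suc k) \<longrightarrow>
              measure mu (fund_interval n a) =
                (\<Prod>m=1..k. \<Prod>i\<in>V m. 1 / real (card (L i))) *
                (\<Prod>i=Min (V (Suc k))..n. 1 / real (card (L i))))"
proof (intro conjI allI impI)
  assume "n \<in> V 1"
  then show "measure mu (fund_interval n a) = (\<Prod>i=1..n. 1 / real (card (L i)))"
    using mu_fund[OF n1 a1 ne] NW_V1 by simp
next
  fix k assume k: "k \<ge> 1" "n \<in> W k"
  then show "measure mu (fund_interval n a) = (\<Prod>m=1..k. \<Prod>i\<in>V m. 1 / real (card (L i)))"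
    using mu_fund[OF n1 a1 ne] NW_W prod_UV by simp
next
  fix k assume k: "k \<ge> 1" "n \<in> V (Suc k)"
  have disj2: "(\<Union>m\<in>{1..k}. V m) \<inter> {Min (V (Suc k))..n} = {}"
  proof -
    have "i < Min (V (Suc k))" if "i \<in> V m" "1 \<le> m" "m \<le> k" for i m
      using ordlt[of m "Suc k" i "Min (V (Suc k))"] V_minmax[of "Suc k"] that by auto
    then show ?thesis by fastforce
  qed
  have fin: "finite (\<Union>m\<in>{1..k}. V m)" using V_props by auto
  have "measure mu (fund_interval n a) = (\<Prod>i\<in>(\<Union>m\<in>{1..k}. V m) \<union> {Min (V (Suc k))..n}. 1 / real (card (L i)))"
    using mu_fund[OF n1 a1 ne] NW_V[OF k] by simp
  also have "\<dots> = (\<Prod>i\<in>(\<Union>m\<in>{1..k}. V m). 1 / real (card (L i))) * (\<Prod>i=Min (V (Suc k))..n. 1 / real (card (L i)))"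
    by (rule prod.union_disjoint) (use fin disj2 in auto)
  also have "(\<Prod>i\<in>(\<Union>m\<in>{1..k}. V m). 1 / real (card (L i))) = (\<Prod>m=1..k. \<Prod>i\<in>V m. 1 / real (card (L i)))"
    by (rule prod_UV)
  finally show "measure mu (fund_interval n a) =
                (\<Prod>m=1..k. \<Prod>i\<in>V m. 1 / real (card (L i))) *
                (\<Prod>i=Min (V (Suc k))..n. 1 / real (card (L i)))" .
qed

end

theorem lemma2p5:
  fixes V W L :: "nat \<Rightarrow> nat set"
  assumes V_int: "\<forall>k\<ge>1. \<exists>l u. l \<le> u \<and> V k = {l..u}"
    and W_int: "\<forall>k\<ge>1. \<exists>l u. l \<le> u \<and> W k = {l..u}"
    and cover: "(\<Union>k\<in>{1..}. V k \<union> W k) = {1..}"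
    and disj: "\<forall>k\<ge>1. \<forall>m\<ge>1. (k \<noteq> m \<longrightarrow> V k \<inter> V m = {} \<and> W k \<inter> W m = {})
                 \<and> V k \<inter> W m = {}"
    and VW: "\<forall>k\<ge>1. Max (V k) + 1 = Min (W k)"
    and WV: "\<forall>k\<ge>1. Max (W k) + 1 = Min (V (Suc k))"
    and L_int: "\<forall>n\<ge>1. \<exists>l u. 1 \<le> l \<and> l \<le> u \<and> L n = {l..u}"
  shows
    "(\<exists>\<mu> :: real measure.
        prob_space \<mu> \<and> sets \<mu> = sets (restrict_space borel {0..1::real}) \<and>
        Lambda_set V W L \<in> sets \<mu> \<and> emeasure \<mu> (Lambda_set V W L) = 1 \<and>
        (\<forall>n\<ge>1. \<forall>a :: nat \<Rightarrow> nat. (\<forall>i\<in>{1..n}. a i \<ge> 1) \<longrightarrow>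
           fund_interval n a \<inter> Lambda_set V W L \<noteq> {} \<longrightarrow>
           (n \<in> V 1 \<longrightarrow>
              measure \<mu> (fund_interval n a) = (\<Prod>i=1..n. 1 / real (card (L i)))) \<and>
           (\<forall>k\<ge>1. n \<in> W k \<longrightarrow>
              measure \<mu> (fund_interval n a) =
                (\<Prod>m=1..k. \<Prod>i\<in>V m. 1 / real (card (L i)))) \<and>
           (\<forall>k\<ge>1. n \<in> V (Suc k) \<longrightarrow>
              measure \<mu> (fund_interval n a) =
                (\<Prod>m=1..k. \<Prod>i\<in>V m. 1 / real (card (L i))) *
                (\<Prod>i=Min (V (Suc k))..n. 1 / real (card (L i))))))
     \<and> (\<forall>t::nat. t \<ge> 2 \<longrightarrow>
           (\<forall>n\<ge>1. L n = {(2*n)^t..<(2*n+1)^t}) \<longrightarrow>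
           Lambda_set V W L \<subseteq> J_set)"
proof -
  interpret VWL V W L using assms by unfold_locales
  show ?thesis
  proof (intro conjI allI impI)
    show "\<exists>\<mu> :: real measure.
        prob_space \<mu> \<and> sets \<mu> = sets (restrict_space borel {0..1::real}) \<and>
        Lambda_set V W L \<in> sets \<mu> \<and> emeasure \<mu> (Lambda_set V W L) = 1 \<and>
        (\<forall>n\<ge>1. \<forall>a :: nat \<Rightarrow> nat. (\<forall>i\<in>{1..n}. a i \<ge> 1) \<longrightarrow>
           fund_interval n a \<inter> Lambda_set V W L \<noteq> {} \<longrightarrow>
           (n \<in> V 1 \<longrightarrow>
              measure \<mu> (fund_interval n a) = (\<Prod>i=1..n. 1 / real (card (L i)))) \<and>
           (\<forall>k\<ge>1. n \<in> W k \<longrightarrow>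
              measure \<mu> (fund_interval n a) =
                (\<Prod>m=1..k. \<Prod>i\<in>V m. 1 / real (card (L i)))) \<and>
           (\<forall>k\<ge>1. n \<in> V (Suc k) \<longrightarrow>
              measure \<mu> (fund_interval n a) =
                (\<Prod>m=1..k. \<Prod>i\<in>V m. 1 / real (card (L i))) *
                (\<Prod>i=Min (V (Suc k))..n. 1 / real (card (L i)))))"
      using mu_prob sets_mu Lambda_sets mu_Lambda mu_cases by blast
  next
    fix t :: nat assume "t \<ge> 2" "\<forall>n\<ge>1. L n = {(2*n)^t..<(2*n+1)^t}"
    then show "Lambda_set V W L \<subseteq> J_set" by (rule partb)
  qed
qed


end
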